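(* Let $R$ be a unital associative ring and $n\ge1$. Let $\Phi$ and $\Phi^{-1}$ be as defined below and let $\Psi=J_2\circ\Phi\circ J_2$. Then $\Psi$ and $\Phi^{-1}$ have the same domain, each maps this domain bijectively onto ${\rm dom}(\Phi)$, and $\Phi^{-1}(A)\sim\Psi(A)$ for every $A\in{\rm dom}(\Psi)={\rm dom}(\Phi^{-1})$.
   Context: $R^*$: units of $R$. $M_n^*(R)$: invertible $n\times n$ matrices; $M_n^\star(R)$: matrices with all entries in $R^*$. $J_1(M)=M^{-1}$ on $M_n^*(R)$; $J_2(M)_{jk}=(M_{kj})^{-1}$ on $M_n^\star(R)$; $J=J_2\circ J_1$, $J^{-1}=J_1\circ J_2$, where $g\circ f$ has domain $\{x\in{\rm dom}(f):f(x)\in{\rm dom}(g)\}$. $\widehat M_n(R)$: matrices whose first row and column consist of $1$'s. For $A=\{a_{j,k}\}\in M_n^\star(R)$: $\Lambda^L(A)_{j,k}=a_{1,1}a_{j,1}^{-1}a_{j,k}a_{1,k}^{-1}$, $\Lambda^R(A)_{j,k}=a_{j,1}^{-1}a_{j,k}a_{1,k}^{-1}a_{1,1}$. $\Phi(A)=J_2(\Lambda^L(A^{-1}))$ with ${\rm dom}(\Phi)={\rm dom}(J)\cap\widehat M_n(R)\cap M_n^\star(R)$; $\Phi^{-1}(A)=\Lambda^R(J^{-1}(A))$ with domain $\widehat M_n(R)\cap\{M\in{\rm dom}(J^{-1}):J^{-1}(M)\in M_n^\star(R)\}$ (this is the inverse map of $\Phi$). $A\sim B$ means $B=D_1^{-1}AD_2$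 for invertible diagonal $D_1,D_2$. *)

theory Defs
  imports "Jordan_Normal_Form.Matrix"
begin

definition is_unit_r :: "'a::ring_1 \<Rightarrow> bool" where
  "is_unit_r x \<longleftrightarrow> (\<exists>y. x * y = 1 \<and> y * x = 1)"

definition rinv :: "'a::ring_1 \<Rightarrow> 'a" where
  "rinv x = (THE y. x * y = 1 \<and> y * x = 1)"

definition minv :: "nat \<Rightarrow> 'a::ring_1 mat \<Rightarrow> 'a mat" where
  "minv n A = (THE B. B \<in> carrier_mat n n \<and> A * B = 1\<^sub>m n \<and> B * A = 1\<^sub>m n)"

definition inv_mats :: "nat \<Rightarrow> 'a::ring_1 mat set" where
  "inv_mats n = {A \<in> carrier_mat n n. invertible_mat A}"

definition unit_mats :: "nat \<Rightarrow> 'a::ring_1 mat set" where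
  "unit_mats n = {A \<in> carrier_mat n n. \<forall>j<n. \<forall>k<n. is_unit_r (A $$ (j,k))}"

definition hat_mats :: "nat \<Rightarrow> 'a::ring_1 mat set" where
  "hat_mats n = {A \<in> carrier_mat n n. \<forall>j<n. A $$ (0,j) = 1 \<and> A $$ (j,0) = 1}"

text \<open>J_1 on dom J_1 = inv_mats n; J_2 on dom J_2 = unit_mats n.\<close>
definition J1 :: "nat \<Rightarrow> 'a::ring_1 mat \<Rightarrow> 'a mat" where
  "J1 n M = minv n M"

definition J2 :: "nat \<Rightarrow> 'a::ring_1 mat \<Rightarrow> 'a mat" where
  "J2 n M = mat n n (\<lambda>(j,k). rinv (M $$ (k,j)))"

definition J :: "nat \<Rightarrow> 'a::ring_1 mat \<Rightarrow> 'a mat" where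
  "J n M = J2 n (J1 n M)"

definition dom_J :: "nat \<Rightarrow> 'a::ring_1 mat set" where
  "dom_J n = {M \<in> inv_mats n. J1 n M \<in> unit_mats n}"

definition Jinv :: "nat \<Rightarrow> 'a::ring_1 mat \<Rightarrow> 'a mat" where
  "Jinv n M = J1 n (J2 n M)"

definition dom_Jinv :: "nat \<Rightarrow> 'a::ring_1 mat set" where
  "dom_Jinv n = {M \<in> unit_mats n. J2 n M \<in> inv_mats n}"

definition LambdaL :: "nat \<Rightarrow> 'a::ring_1 mat \<Rightarrow> 'a mat" where
  "LambdaL n A = mat n n (\<lambda>(j,k). A $$ (0,0) * rinv (A $$ (j,0)) * A $$ (j,k) * rinv (A $$ (0,k)))"

definition LambdaR :: "nat \<Rightarrow> 'a::ring_1 mat \<Rightarrow> 'a mat" where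
  "LambdaR n A = mat n n (\<lambda>(j,k). rinv (A $$ (j,0)) * A $$ (j,k) * rinv (A $$ (0,k)) * A $$ (0,0))"

definition Phi :: "nat \<Rightarrow> 'a::ring_1 mat \<Rightarrow> 'a mat" where
  "Phi n A = J2 n (LambdaL n (minv n A))"

definition dom_Phi :: "nat \<Rightarrow> 'a::ring_1 mat set" where
  "dom_Phi n = dom_J n \<inter> hat_mats n \<inter> unit_mats n"

definition Phi_inv :: "nat \<Rightarrow> 'a::ring_1 mat \<Rightarrow> 'a mat" where
  "Phi_inv n A = LambdaR n (Jinv n A)"

definition dom_Phi_inv :: "nat \<Rightarrow> 'a::ring_1 mat set" where
  "dom_Phi_inv n = hat_mats n \<inter> {M \<in> dom_Jinv n. Jinv n M \<in> unit_mats n}"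

definition Psi :: "nat \<Rightarrow> 'a::ring_1 mat \<Rightarrow> 'a mat" where
  "Psi n A = J2 n (Phi n (J2 n A))"

definition dom_Psi :: "nat \<Rightarrow> 'a::ring_1 mat set" where
  "dom_Psi n = {A \<in> unit_mats n. J2 n A \<in> dom_Phi n \<and> Phi n (J2 n A) \<in> unit_mats n}"

definition diag_equiv :: "nat \<Rightarrow> 'a::ring_1 mat \<Rightarrow> 'a mat \<Rightarrow> bool" where
  "diag_equiv n A B \<longleftrightarrow> (\<exists>D1 D2. D1 \<in> inv_mats n \<and> D2 \<in> inv_mats n \<and>
      diagonal_mat D1 \<and> diagonal_mat D2 \<and> B = minv n D1 * A * D2)"

end

theory Submission imports Defs begin

lemma unit_rinv: assumes "is_unit_r (x::'a::ring_1)" shows "x * rinv x = 1" "rinv x * x = 1"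
proof -
  obtain y where y: "x * y = 1" "y * x = 1" using assms unfolding is_unit_r_def by blast
  have u: "z = y" if "x * z = 1 \<and> z * x = 1" for z
  proof -
    have "z = (y * x) * z" using y by simp
    also have "\<dots> = y * (x * z)" by (simp only: mult.assoc)
    also have "\<dots> = y" using that by simp
    finally show "z = y" .
  qed
  have "rinv x = y" unfolding rinv_def
    by (rule the_equality) (use y in blast, use u in blast)
  then show "x * rinv x = 1" "rinv x * x = 1" using y by auto
qed

lemma rinv_eq: assumes "(x::'a::ring_1) * y = 1" "y * x = 1" shows "rinv x = y"
proof -
  have "is_unit_r x" using assms unfolding is_unit_r_def by blast
  then have "rinv x = rinv x * (x * y)" using assms by simp
  also have "\<dots> = y" using unit_rinv[OF \<open>is_unit_r x\<close>] by (simp flip: mult.assoc)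
  finally show ?thesis .
qed

lemma unit_rinv_cancel[simp]: assumes "is_unit_r (x::'a::ring_1)"
  shows "x * (rinv x * y) = y" "rinv x * (x * y) = y"
  using unit_rinv[OF assms] by (simp_all flip: mult.assoc)

lemma unit_1[simp]: "is_unit_r (1::'a::ring_1)" unfolding is_unit_r_def by auto
lemma rinv_1[simp]: "rinv (1::'a::ring_1) = 1" by (rule rinv_eq) auto

lemma unit_inv_pair: assumes "is_unit_r (x::'a::ring_1)" "is_unit_r y"
  shows "(x*y) * (rinv y * rinv x) = 1" "(rinv y * rinv x) * (x*y) = 1"
proof -
  have "(x*y) * (rinv y * rinv x) = x * (y * (rinv y * rinv x))" by (simp only: mult.assoc)
  also have "\<dots> = 1" using assms unit_rinv[OF assms(1)] by simp
  finally show "(x*y) * (rinv y * rinv x) = 1" .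
  have "(rinv y * rinv x) * (x*y) = rinv y * (rinv x * (x * y))" by (simp only: mult.assoc)
  also have "\<dots> = 1" using assms unit_rinv[OF assms(2)] by simp
  finally show "(rinv y * rinv x) * (x*y) = 1" .
qed

lemma unit_mult[simp]: assumes "is_unit_r (x::'a::ring_1)" "is_unit_r y" shows "is_unit_r (x*y)"
  using unit_inv_pair[OF assms] unfolding is_unit_r_def by blast

lemma unit_rinv_unit[simp]: assumes "is_unit_r (x::'a::ring_1)" shows "is_unit_r (rinv x)"
  using unit_rinv[OF assms] unfolding is_unit_r_def by blast

lemma rinv_rinv[simp]: assumes "is_unit_r (x::'a::ring_1)" shows "rinv (rinv x) = x"
  using unit_rinv[OF assms] by (intro rinv_eq) auto

lemma rinv_mult: assumes "is_unit_r (x::'a::ring_1)" "is_unit_r y" shows "rinv (x*y) = rinv y * rinv x"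
  using unit_inv_pair[OF assms] by (rule rinv_eq)

lemma rinv_eq_1: assumes "is_unit_r (x::'a::ring_1)" "rinv x = 1" shows "x = 1"
  using unit_rinv[OF assms(1)] assms(2) by simp


lemma invertible_carrier: assumes "A \<in> carrier_mat n n"
  shows "invertible_mat A \<longleftrightarrow> (\<exists>B \<in> carrier_mat n n. A * B = 1\<^sub>m n \<and> B * A = 1\<^sub>m n)"
proof
  assume "invertible_mat A"
  then obtain B where B: "inverts_mat A B" "inverts_mat B A" unfolding invertible_mat_def by blast
  have rA: "dim_row A = n" and cA: "dim_col A = n" using assms by auto
  have AB: "A * B = 1\<^sub>m n" using B(1) rA unfolding inverts_mat_def by simp
  have BA: "B * A = 1\<^sub>m (dim_row B)" using B(2) unfolding inverts_mat_def by simp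
  have "dim_col (B * A) = n" using cA by simp
  then have r: "dim_row B = n" unfolding BA by simp
  have "dim_col (A * B) = n" unfolding AB by simp
  then have c: "dim_col B = n" by simp
  have Bc: "B \<in> carrier_mat n n" using r c by (intro carrier_matI)
  have BA': "B * A = 1\<^sub>m n" using BA r by simp
  show "\<exists>B \<in> carrier_mat n n. A * B = 1\<^sub>m n \<and> B * A = 1\<^sub>m n"
    by (rule bexI[of _ B]) (use Bc AB BA' in simp_all)
next
  assume "\<exists>B \<in> carrier_mat n n. A * B = 1\<^sub>m n \<and> B * A = 1\<^sub>m n"
  then obtain B where B: "B \<in> carrier_mat n n" "A * B = 1\<^sub>m n" "B * A = 1\<^sub>m n" by blast
  have rA: "dim_row A = n" and cA: "dim_col A = n" using assms by auto
  have rB: "dim_row B = n" using B(1) by simp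
  have "inverts_mat A B" "inverts_mat B A" unfolding inverts_mat_def using B rA rB by simp_all
  moreover have "square_mat A" using rA cA by simp
  ultimately show "invertible_mat A" unfolding invertible_mat_def by blast
qed

lemma minv_unique: assumes "A \<in> carrier_mat n n" "B \<in> carrier_mat n n" "A * B = 1\<^sub>m n" "B * A = 1\<^sub>m n"
  shows "minv n A = B"
  unfolding minv_def
proof (rule the_equality)
  show "B \<in> carrier_mat n n \<and> A * B = 1\<^sub>m n \<and> B * A = 1\<^sub>m n" using assms by auto
  fix C assume C0: "C \<in> carrier_mat n n \<and> A * C = 1\<^sub>m n \<and> C * A = 1\<^sub>m n"
  then have C: "C \<in> carrier_mat n n" "A * C = 1\<^sub>m n" by auto
  have "C = (B * A) * C" using left_mult_one_mat[OF C(1)] assms(4) by simp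
  also have "\<dots> = B * (A * C)" by (rule assoc_mult_mat[OF assms(2) assms(1) C(1)])
  also have "\<dots> = B" using C(2) right_mult_one_mat[OF assms(2)] by simp
  finally show "C = B" .
qed

lemma minv_props: assumes "A \<in> inv_mats n"
  shows "minv n A \<in> carrier_mat n n" "A * minv n A = 1\<^sub>m n" "minv n A * A = 1\<^sub>m n"
proof -
  have A: "A \<in> carrier_mat n n" "invertible_mat A" using assms unfolding inv_mats_def by auto
  then obtain B where B: "B \<in> carrier_mat n n" "A * B = 1\<^sub>m n" "B * A = 1\<^sub>m n"
    using invertible_carrier by blast
  have "minv n A = B" using minv_unique[OF A(1) B] .
  then show "minv n A \<in> carrier_mat n n" "A * minv n A = 1\<^sub>m n" "minv n A * A = 1\<^sub>m n" using B by auto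
qed

lemma inv_matsI: assumes "A \<in> carrier_mat n n" "B \<in> carrier_mat n n" "A * B = 1\<^sub>m n" "B * A = 1\<^sub>m n"
  shows "A \<in> inv_mats n"
  using assms invertible_carrier[OF assms(1)] unfolding inv_mats_def by blast

definition diagm :: "nat \<Rightarrow> (nat \<Rightarrow> 'a) \<Rightarrow> 'a::ring_1 mat" where
  "diagm n u = mat n n (\<lambda>(i,j). if i = j then u i else 0)"

definition scale :: "nat \<Rightarrow> (nat \<Rightarrow> 'a) \<Rightarrow> 'a::ring_1 mat \<Rightarrow> (nat \<Rightarrow> 'a) \<Rightarrow> 'a mat" where
  "scale n u X v = mat n n (\<lambda>(j,k). u j * X $$ (j,k) * v k)"

lemma diagm_carrier[simp]: "diagm n u \<in> carrier_mat n n" unfolding diagm_def by simp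
lemma scale_carrier[simp]: "scale n u X v \<in> carrier_mat n n" unfolding scale_def by simp
lemma scale_index[simp]: "j < n \<Longrightarrow> k < n \<Longrightarrow> scale n u X v $$ (j,k) = u j * X $$ (j,k) * v k"
  unfolding scale_def by simp

lemma diagm_mult_left: assumes "X \<in> carrier_mat n m"
  shows "diagm n u * X = mat n m (\<lambda>(i,j). u i * X $$ (i,j))"
proof (rule eq_matI)
  fix i j assume ij: "i < dim_row (mat n m (\<lambda>(i,j). u i * X $$ (i,j)))" "j < dim_col (mat n m (\<lambda>(i,j). u i * X $$ (i,j)))"
  then have i: "i < n" and j: "j < m" by auto
  have "(diagm n u * X) $$ (i,j) = (\<Sum>k\<in>{0..<n}. (if i = k then u i else 0) * X $$ (k,j))"
    using i j assms unfolding diagm_def by (auto simp: scalar_prod_def intro!: sum.cong)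
  also have "\<dots> = (\<Sum>k\<in>{0..<n}. if i = k then u i * X $$ (k,j) else 0)"
    by (rule sum.cong) auto
  also have "\<dots> = u i * X $$ (i,j)" using i by (simp add: sum.delta)
  finally show "(diagm n u * X) $$ (i,j) = mat n m (\<lambda>(i,j). u i * X $$ (i,j)) $$ (i,j)" using i j by simp
qed (use assms in \<open>auto simp: diagm_def\<close>)

lemma diagm_mult_right: assumes "X \<in> carrier_mat m n"
  shows "X * diagm n v = mat m n (\<lambda>(i,j). X $$ (i,j) * v j)"
proof (rule eq_matI)
  fix i j assume ij: "i < dim_row (mat m n (\<lambda>(i,j). X $$ (i,j) * v j))" "j < dim_col (mat m n (\<lambda>(i,j). X $$ (i,j) * v j))"
  then have i: "i < m" and j: "j < n" by auto
  have "(X * diagm n v) $$ (i,j) = (\<Sum>k\<in>{0..<n}. X $$ (i,k) * (if k = j then v k else 0))"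
    using i j assms unfolding diagm_def by (auto simp: scalar_prod_def intro!: sum.cong)
  also have "\<dots> = (\<Sum>k\<in>{0..<n}. if k = j then X $$ (i,k) * v j else 0)"
    by (rule sum.cong) auto
  also have "\<dots> = X $$ (i,j) * v j" using j by (simp add: sum.delta')
  finally show "(X * diagm n v) $$ (i,j) = mat m n (\<lambda>(i,j). X $$ (i,j) * v j) $$ (i,j)" using i j by simp
qed (use assms in \<open>auto simp: diagm_def\<close>)

lemma scale_diagm: assumes "X \<in> carrier_mat n n"
  shows "scale n u X v = diagm n u * X * diagm n v"
proof -
  have "diagm n u * X * diagm n v = mat n n (\<lambda>(i,j). u i * X $$ (i,j)) * diagm n v"
    using diagm_mult_left[OF assms] by simp
  also have "\<dots> = scale n u X v"
    by (subst diagm_mult_right) (auto simp: scale_def)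
  finally show ?thesis by simp
qed


lemma diagm_mult: "diagm n u * diagm n w = diagm n (\<lambda>i. u i * w i)"
  by (subst diagm_mult_left) (auto simp: diagm_def)

lemma diagm_one: "(\<forall>i<n. u i = 1) \<Longrightarrow> diagm n u = 1\<^sub>m n"
  by (rule eq_matI) (auto simp: diagm_def)

lemma diagm_cancel: assumes "\<forall>i<n. u i * w i = 1" "Y \<in> carrier_mat n m"
  shows "diagm n u * (diagm n w * Y) = Y"
proof -
  have "diagm n u * (diagm n w * Y) = (diagm n u * diagm n w) * Y"
    using assms(2) by (simp only: assoc_mult_mat[OF diagm_carrier diagm_carrier assms(2), symmetric])
  also have "\<dots> = Y" unfolding diagm_mult using diagm_one[of n "\<lambda>i. u i * w i"] assms by simp
  finally show ?thesis .
qed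

lemma diagm_cancel_r: assumes "\<forall>i<n. u i * w i = 1" "Y \<in> carrier_mat m n"
  shows "Y * diagm n u * diagm n w = Y"
proof -
  have "Y * diagm n u * diagm n w = Y * (diagm n u * diagm n w)"
    by (rule assoc_mult_mat[OF assms(2) diagm_carrier diagm_carrier])
  also have "\<dots> = Y" unfolding diagm_mult using diagm_one[of n "\<lambda>i. u i * w i"] assms by simp
  finally show ?thesis .
qed

lemma mult_cc: "A \<in> carrier_mat n n \<Longrightarrow> B \<in> carrier_mat n n \<Longrightarrow> A * B \<in> carrier_mat n n"
  by simp
lemma assoc_nn: "A \<in> carrier_mat n n \<Longrightarrow> B \<in> carrier_mat n n \<Longrightarrow> C \<in> carrier_mat n n \<Longrightarrow> A * B * C = A * (B * C)"
  by simp

lemma scale_inv: assumes X: "X \<in> inv_mats n" and u: "\<forall>j<n. is_unit_r (u j)" and v: "\<forall>j<n. is_unit_r (v j)"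
  shows "scale n u X v \<in> inv_mats n"
    "minv n (scale n u X v) = scale n (\<lambda>j. rinv (v j)) (minv n X) (\<lambda>j. rinv (u j))"
proof -
  have Xc: "X \<in> carrier_mat n n" using X unfolding inv_mats_def by auto
  note Y = minv_props[OF X]
  define Y where "Y = minv n X"
  have Yc: "Y \<in> carrier_mat n n" and XY: "X * Y = 1\<^sub>m n" and YX: "Y * X = 1\<^sub>m n"
    using Y unfolding Y_def by auto
  define Du where "Du = diagm n u"
  define Dv where "Dv = diagm n v"
  define Du' where "Du' = diagm n (\<lambda>j. rinv (u j))"
  define Dv' where "Dv' = diagm n (\<lambda>j. rinv (v j))"
  have c: "Du \<in> carrier_mat n n" "Dv \<in> carrier_mat n n" "Du' \<in> carrier_mat n n" "Dv' \<in> carrier_mat n n"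
    unfolding Du_def Dv_def Du'_def Dv'_def by simp_all
  have uu: "\<forall>i<n. u i * rinv (u i) = 1" "\<forall>i<n. rinv (u i) * u i = 1"
    using u unit_rinv by blast+
  have vv: "\<forall>i<n. v i * rinv (v i) = 1" "\<forall>i<n. rinv (v i) * v i = 1"
    using v unit_rinv by blast+
  have S: "scale n u X v = Du * X * Dv" unfolding Du_def Dv_def by (rule scale_diagm[OF Xc])
  have T: "scale n (\<lambda>j. rinv (v j)) Y (\<lambda>j. rinv (u j)) = Dv' * Y * Du'"
    unfolding Du'_def Dv'_def by (rule scale_diagm[OF Yc])
  have ST: "(Du * X * Dv) * (Dv' * Y * Du') = 1\<^sub>m n"
  proof -
    have "(Du * X * Dv) * (Dv' * Y * Du') = Du * (X * (Dv * (Dv' * (Y * Du'))))"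
      using c Xc Yc by (simp add: assoc_nn mult_cc)
    also have "Dv * (Dv' * (Y * Du')) = Y * Du'"
      unfolding Dv_def Dv'_def by (rule diagm_cancel[OF vv(1), of _ n]) (use Yc c in simp)
    also have "Du * (X * (Y * Du')) = Du * (X * Y) * Du'"
      using c Xc Yc by (simp add: assoc_nn mult_cc)
    also have "\<dots> = Du * Du'" using XY c by simp
    also have "\<dots> = 1\<^sub>m n" unfolding Du_def Du'_def diagm_mult using uu diagm_one[of n "\<lambda>i. u i * rinv (u i)"] by simp
    finally show ?thesis .
  qed
  have TS: "(Dv' * Y * Du') * (Du * X * Dv) = 1\<^sub>m n"
  proof -
    have "(Dv' * Y * Du') * (Du * X * Dv) = Dv' * (Y * (Du' * (Du * (X * Dv))))"
      using c Xc Yc by (simp add: assoc_nn mult_cc)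
    also have "Du' * (Du * (X * Dv)) = X * Dv"
      unfolding Du_def Du'_def by (rule diagm_cancel[OF uu(2), of _ n]) (use Xc c in simp)
    also have "Dv' * (Y * (X * Dv)) = Dv' * (Y * X) * Dv"
      using c Xc Yc by (simp add: assoc_nn mult_cc)
    also have "\<dots> = Dv' * Dv" using YX c by simp
    also have "\<dots> = 1\<^sub>m n" unfolding Dv_def Dv'_def diagm_mult using vv diagm_one[of n "\<lambda>i. rinv (v i) * v i"] by simp
    finally show ?thesis .
  qed
  show "scale n u X v \<in> inv_mats n"
    unfolding S by (rule inv_matsI[OF _ _ ST TS]) (use c Xc Yc in simp_all)
  show "minv n (scale n u X v) = scale n (\<lambda>j. rinv (v j)) (minv n X) (\<lambda>j. rinv (u j))"
    unfolding S Y_def[symmetric] T by (rule minv_unique[OF _ _ ST TS]) (use c Xc Yc in simp_all)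
qed


lemma J2_carrier[simp]: "J2 n M \<in> carrier_mat n n" unfolding J2_def by simp
lemma J2_index[simp]: "j < n \<Longrightarrow> k < n \<Longrightarrow> J2 n M $$ (j,k) = rinv (M $$ (k,j))"
  unfolding J2_def by simp
lemma J2_dim[simp]: "dim_row (J2 n M) = n" "dim_col (J2 n M) = n"
  unfolding J2_def by simp_all

lemma unit_matsD: "M \<in> unit_mats n \<Longrightarrow> j < n \<Longrightarrow> k < n \<Longrightarrow> is_unit_r (M $$ (j,k))"
  unfolding unit_mats_def by auto
lemma unit_mats_carrier: "M \<in> unit_mats n \<Longrightarrow> M \<in> carrier_mat n n"
  unfolding unit_mats_def by auto
lemma unit_matsI: "M \<in> carrier_mat n n \<Longrightarrow> (\<And>j k. j < n \<Longrightarrow> k < n \<Longrightarrow> is_unit_r (M $$ (j,k))) \<Longrightarrow> M \<in> unit_mats n"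
  unfolding unit_mats_def by auto

lemma J2_unit: "M \<in> unit_mats n \<Longrightarrow> J2 n M \<in> unit_mats n"
  by (rule unit_matsI) (auto dest: unit_matsD)

lemma J2_J2: assumes "M \<in> unit_mats n" shows "J2 n (J2 n M) = M"
proof (rule eq_matI)
  have Mc: "M \<in> carrier_mat n n" using unit_mats_carrier[OF assms] .
  fix i j assume "i < dim_row M" "j < dim_col M"
  then have "i < n" "j < n" using Mc by auto
  then show "J2 n (J2 n M) $$ (i, j) = M $$ (i, j)" using unit_matsD[OF assms] by simp
qed (use unit_mats_carrier[OF assms] in auto)

lemma hat_matsD: "M \<in> hat_mats n \<Longrightarrow> j < n \<Longrightarrow> M $$ (0,j) = 1 \<and> M $$ (j,0) = 1"
  unfolding hat_mats_def by auto
lemma hat_mats_carrier: "M \<in> hat_mats n \<Longrightarrow> M \<in> carrier_mat n n"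
  unfolding hat_mats_def by auto

lemma J2_hat: "M \<in> hat_mats n \<Longrightarrow> J2 n M \<in> hat_mats n"
  unfolding hat_mats_def by auto

lemma J2_hat_rev: assumes "M \<in> unit_mats n" "J2 n M \<in> hat_mats n" shows "M \<in> hat_mats n"
  unfolding hat_mats_def
proof (intro CollectI conjI allI impI)
  show "M \<in> carrier_mat n n" using unit_mats_carrier[OF assms(1)] .
  fix j assume j: "j < n"
  then have z: "0 < n" by simp
  have "rinv (M $$ (j,0)) = 1" "rinv (M $$ (0,j)) = 1" using hat_matsD[OF assms(2) j] j z by auto
  then show "M $$ (0,j) = 1" "M $$ (j,0) = 1"
    using rinv_eq_1 unit_matsD[OF assms(1)] j z by blast+
qed

lemma LambdaL_scale: "LambdaL n X = scale n (\<lambda>j. X $$ (0,0) * rinv (X $$ (j,0))) X (\<lambda>k. rinv (X $$ (0,k)))"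
  unfolding LambdaL_def scale_def by simp

lemma LambdaR_scale: "LambdaR n X = scale n (\<lambda>j. rinv (X $$ (j,0))) X (\<lambda>k. rinv (X $$ (0,k)) * X $$ (0,0))"
  unfolding LambdaR_def scale_def by (simp add: mult.assoc)

lemma scale_unit: assumes "X \<in> unit_mats n" "\<forall>j<n. is_unit_r (u j)" "\<forall>j<n. is_unit_r (v j)"
  shows "scale n u X v \<in> unit_mats n"
  by (rule unit_matsI) (use assms unit_matsD[OF assms(1)] in auto)

lemma LambdaL_hat: assumes "X \<in> unit_mats n" shows "LambdaL n X \<in> hat_mats n"
  unfolding hat_mats_def
proof (intro CollectI conjI allI impI)
  show "LambdaL n X \<in> carrier_mat n n" unfolding LambdaL_def by simp
  fix j assume j: "j < n"
  then have z: "0 < n" by simp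
  have u: "is_unit_r (X $$ (0,0))" "is_unit_r (X $$ (j,0))" "is_unit_r (X $$ (0,j))"
    using unit_matsD[OF assms] j z by auto
  show "LambdaL n X $$ (0,j) = 1" "LambdaL n X $$ (j,0) = 1"
    unfolding LambdaL_def using j z u unit_rinv[OF u(1)] unit_rinv[OF u(2)] unit_rinv[OF u(3)]
    by (simp_all add: mult.assoc)
qed

lemma LambdaR_hat: assumes "X \<in> unit_mats n" shows "LambdaR n X \<in> hat_mats n"
  unfolding hat_mats_def
proof (intro CollectI conjI allI impI)
  show "LambdaR n X \<in> carrier_mat n n" unfolding LambdaR_def by simp
  fix j assume j: "j < n"
  then have z: "0 < n" by simp
  have u: "is_unit_r (X $$ (0,0))" "is_unit_r (X $$ (j,0))" "is_unit_r (X $$ (0,j))"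
    using unit_matsD[OF assms] j z by auto
  show "LambdaR n X $$ (0,j) = 1" "LambdaR n X $$ (j,0) = 1"
    unfolding LambdaR_def using j z u unit_rinv[OF u(1)] unit_rinv[OF u(2)] unit_rinv[OF u(3)]
    by (simp_all add: mult.assoc)
qed

lemma LambdaL_scale_hat: assumes "X \<in> hat_mats n" "\<forall>j<n. is_unit_r (u j)" "\<forall>j<n. is_unit_r (v j)" "u 0 = 1"
  shows "LambdaL n (scale n u X v) = X"
proof (rule eq_matI)
  have Xc: "X \<in> carrier_mat n n" using hat_mats_carrier[OF assms(1)] .
  fix j k assume "j < dim_row X" "k < dim_col X"
  then have j: "j < n" and k: "k < n" using Xc by auto
  then have z: "0 < n" by simp
  have un: "is_unit_r (u j)" "is_unit_r (v k)" "is_unit_r (v 0)" using assms j k z by auto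
  have h: "X $$ (0,0) = 1" "X $$ (j,0) = 1" "X $$ (0,k) = 1" using hat_matsD[OF assms(1)] j k z by auto
  have "LambdaL n (scale n u X v) $$ (j,k) = v 0 * rinv (u j * v 0) * (u j * X $$ (j,k) * v k) * rinv (v k)"
    unfolding LambdaL_def using j k z h assms(4) by simp
  also have "\<dots> = X $$ (j,k)"
    using un unit_rinv[OF un(2)] by (simp add: rinv_mult mult.assoc)
  finally show "LambdaL n (scale n u X v) $$ (j,k) = X $$ (j,k)" .
qed (use hat_mats_carrier[OF assms(1)] in \<open>auto simp: LambdaL_def\<close>)

lemma LambdaR_scale_hat: assumes "X \<in> hat_mats n" "\<forall>j<n. is_unit_r (u j)" "\<forall>j<n. is_unit_r (v j)" "v 0 = 1"
  shows "LambdaR n (scale n u X v) = X"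
proof (rule eq_matI)
  have Xc: "X \<in> carrier_mat n n" using hat_mats_carrier[OF assms(1)] .
  fix j k assume "j < dim_row X" "k < dim_col X"
  then have j: "j < n" and k: "k < n" using Xc by auto
  then have z: "0 < n" by simp
  have un: "is_unit_r (u j)" "is_unit_r (v k)" "is_unit_r (u 0)" using assms j k z by auto
  have h: "X $$ (0,0) = 1" "X $$ (j,0) = 1" "X $$ (0,k) = 1" using hat_matsD[OF assms(1)] j k z by auto
  have "LambdaR n (scale n u X v) $$ (j,k) = rinv (u j) * (u j * X $$ (j,k) * v k) * rinv (u 0 * v k) * u 0"
    unfolding LambdaR_def using j k z h assms(4) by simp
  also have "\<dots> = X $$ (j,k)"
    using un unit_rinv[OF un(2)] unit_rinv[OF un(3)] by (simp add: rinv_mult mult.assoc)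
  finally show "LambdaR n (scale n u X v) $$ (j,k) = X $$ (j,k)" .
qed (use hat_mats_carrier[OF assms(1)] in \<open>auto simp: LambdaR_def\<close>)


lemma minv_inv: assumes "A \<in> inv_mats n" shows "minv n A \<in> inv_mats n" "minv n (minv n A) = A"
proof -
  note m = minv_props[OF assms]
  have Ac: "A \<in> carrier_mat n n" using assms unfolding inv_mats_def by auto
  show "minv n A \<in> inv_mats n" by (rule inv_matsI[OF m(1) Ac m(3) m(2)])
  show "minv n (minv n A) = A" by (rule minv_unique[OF m(1) Ac m(3) m(2)])
qed

lemma dom_Phi_iff: "A \<in> dom_Phi n \<longleftrightarrow> A \<in> inv_mats n \<and> minv n A \<in> unit_mats n \<and> A \<in> hat_mats n \<and> A \<in> unit_mats n"
  unfolding dom_Phi_def dom_J_def J1_def by auto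

lemma dom_Phi_inv_iff: "A \<in> dom_Phi_inv n \<longleftrightarrow> A \<in> hat_mats n \<and> A \<in> unit_mats n \<and> J2 n A \<in> inv_mats n \<and> minv n (J2 n A) \<in> unit_mats n"
  unfolding dom_Phi_inv_def dom_Jinv_def Jinv_def J1_def by auto

lemma J2_P_Q: "A \<in> dom_Phi n \<Longrightarrow> J2 n A \<in> dom_Phi_inv n"
  unfolding dom_Phi_iff dom_Phi_inv_iff using J2_hat J2_unit J2_J2 by metis

lemma J2_Q_P: "A \<in> dom_Phi_inv n \<Longrightarrow> J2 n A \<in> dom_Phi n"
  unfolding dom_Phi_iff dom_Phi_inv_iff using J2_hat J2_unit J2_J2 by metis

lemma unit_rinv_all: "\<forall>j<n. is_unit_r (u j) \<Longrightarrow> \<forall>j<n. is_unit_r (rinv (u j))" by auto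

lemma Phi_P: assumes A: "A \<in> dom_Phi n" and z: "0 < n"
  shows "Phi n A \<in> dom_Phi_inv n" "Phi_inv n (Phi n A) = A"
proof -
  have Ai: "A \<in> inv_mats n" and Bu: "minv n A \<in> unit_mats n" and Ah: "A \<in> hat_mats n" and Au: "A \<in> unit_mats n"
    using A unfolding dom_Phi_iff by auto
  define B where "B = minv n A"
  have Bi: "B \<in> inv_mats n" and BB: "minv n B = A" using minv_inv[OF Ai] unfolding B_def by auto
  have Bu': "B \<in> unit_mats n" using Bu B_def by simp
  define u where "u = (\<lambda>j. B $$ (0,0) * rinv (B $$ (j,0)))"
  define v where "v = (\<lambda>k. rinv (B $$ (0,k)))"
  have uu: "\<forall>j<n. is_unit_r (u j)" unfolding u_def using unit_matsD[OF Bu'] z by auto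
  have vu: "\<forall>j<n. is_unit_r (v j)" unfolding v_def using unit_matsD[OF Bu'] z by auto
  have u0: "u 0 = 1" unfolding u_def using unit_rinv unit_matsD[OF Bu'] z by blast
  define L where "L = LambdaL n B"
  have L: "L = scale n u B v" unfolding L_def u_def v_def by (rule LambdaL_scale)
  have Lu: "L \<in> unit_mats n" unfolding L by (rule scale_unit[OF Bu' uu vu])
  have Li: "L \<in> inv_mats n" unfolding L by (rule scale_inv(1)[OF Bi uu vu])
  have Lm: "minv n L = scale n (\<lambda>j. rinv (v j)) A (\<lambda>j. rinv (u j))"
    unfolding L scale_inv(2)[OF Bi uu vu] BB ..
  have Ph: "Phi n A = J2 n L" unfolding Phi_def L_def B_def ..
  have Lh: "L \<in> hat_mats n" unfolding L_def by (rule LambdaL_hat[OF Bu'])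
  have mLu: "minv n L \<in> unit_mats n" unfolding Lm
    by (rule scale_unit[OF Au]) (use uu vu in auto)
  show "Phi n A \<in> dom_Phi_inv n" unfolding Ph dom_Phi_inv_iff J2_J2[OF Lu]
    using J2_hat[OF Lh] J2_unit[OF Lu] Li mLu by blast
  show "Phi_inv n (Phi n A) = A" unfolding Ph Phi_inv_def Jinv_def J1_def J2_J2[OF Lu] Lm
    by (rule LambdaR_scale_hat[OF Ah]) (use uu vu u0 in auto)
qed

lemma Phi_inv_Q: assumes A: "A \<in> dom_Phi_inv n" and z: "0 < n"
  shows "Phi_inv n A \<in> dom_Phi n" "Phi n (Phi_inv n A) = A"
proof -
  have Ah: "A \<in> hat_mats n" and Au: "A \<in> unit_mats n" and Ci: "J2 n A \<in> inv_mats n" and Mu: "minv n (J2 n A) \<in> unit_mats n"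
    using A unfolding dom_Phi_inv_iff by auto
  define C where "C = J2 n A"
  have Ch: "C \<in> hat_mats n" and Cu: "C \<in> unit_mats n" unfolding C_def using J2_hat[OF Ah] J2_unit[OF Au] by auto
  define M where "M = minv n C"
  have Mi: "M \<in> inv_mats n" and MM: "minv n M = C" using minv_inv Ci unfolding M_def C_def by auto
  have Mu': "M \<in> unit_mats n" using Mu M_def C_def by simp
  define u where "u = (\<lambda>j. rinv (M $$ (j,0)))"
  define v where "v = (\<lambda>k. rinv (M $$ (0,k)) * M $$ (0,0))"
  have uu: "\<forall>j<n. is_unit_r (u j)" unfolding u_def using unit_matsD[OF Mu'] z by auto
  have vu: "\<forall>j<n. is_unit_r (v j)" unfolding v_def using unit_matsD[OF Mu'] z by auto
  have v0: "v 0 = 1" unfolding v_def using unit_rinv unit_matsD[OF Mu'] z by blast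
  define R where "R = LambdaR n M"
  have R: "R = scale n u M v" unfolding R_def u_def v_def by (rule LambdaR_scale)
  have Ru: "R \<in> unit_mats n" unfolding R by (rule scale_unit[OF Mu' uu vu])
  have Ri: "R \<in> inv_mats n" unfolding R by (rule scale_inv(1)[OF Mi uu vu])
  have Rm: "minv n R = scale n (\<lambda>j. rinv (v j)) C (\<lambda>j. rinv (u j))"
    unfolding R scale_inv(2)[OF Mi uu vu] MM ..
  have Ph: "Phi_inv n A = R" unfolding Phi_inv_def Jinv_def J1_def R_def M_def C_def ..
  have Rh: "R \<in> hat_mats n" unfolding R_def by (rule LambdaR_hat[OF Mu'])
  have mRu: "minv n R \<in> unit_mats n" unfolding Rm
    by (rule scale_unit[OF Cu]) (use uu vu in auto)
  show "Phi_inv n A \<in> dom_Phi n" unfolding Ph dom_Phi_iff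
    using Ri mRu Rh Ru by blast
  have "LambdaL n (minv n R) = C" unfolding Rm
    by (rule LambdaL_scale_hat[OF Ch]) (use uu vu v0 in auto)
  then show "Phi n (Phi_inv n A) = A" unfolding Ph Phi_def C_def using J2_J2[OF Au] by simp
qed


lemma dom_Psi_eq: "dom_Psi n = dom_Phi_inv n"
proof
  show "dom_Psi n \<subseteq> dom_Phi_inv n"
  proof
    fix A assume "A \<in> dom_Psi n"
    then have "A \<in> unit_mats n" "J2 n A \<in> dom_Phi n" unfolding dom_Psi_def by auto
    then show "A \<in> dom_Phi_inv n" using J2_P_Q J2_J2 by metis
  qed
  show "dom_Phi_inv n \<subseteq> dom_Psi n"
  proof
    fix A assume A: "A \<in> dom_Phi_inv n"
    then have Au: "A \<in> unit_mats n" unfolding dom_Phi_inv_iff by auto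
    have P: "J2 n A \<in> dom_Phi n" using J2_Q_P[OF A] .
    have "Phi n (J2 n A) \<in> unit_mats n"
    proof (cases "n = 0")
      case True
      then show ?thesis unfolding unit_mats_def Phi_def by simp
    next
      case False
      then show ?thesis using Phi_P(1)[OF P] unfolding dom_Phi_inv_iff by simp
    qed
    then show "A \<in> dom_Psi n" unfolding dom_Psi_def using Au P by auto
  qed
qed

lemma LambdaL_unit: assumes "M \<in> unit_mats n" shows "LambdaL n M \<in> unit_mats n"
  unfolding LambdaL_scale by (rule scale_unit[OF assms]) (use unit_matsD[OF assms] in auto)

lemma Psi_Q: assumes "A \<in> dom_Phi_inv n" shows "Psi n A = LambdaL n (minv n (J2 n A))"
proof -
  have "minv n (J2 n A) \<in> unit_mats n" using assms unfolding dom_Phi_inv_iff by auto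
  then show ?thesis unfolding Psi_def Phi_def using J2_J2 LambdaL_unit by metis
qed

lemma diagm_inv: assumes "\<forall>j<n. is_unit_r (u j)"
  shows "diagm n u \<in> inv_mats n" "minv n (diagm n u) = diagm n (\<lambda>j. rinv (u j))" "diagonal_mat (diagm n u)"
proof -
  have 1: "diagm n u * diagm n (\<lambda>j. rinv (u j)) = 1\<^sub>m n"
    unfolding diagm_mult by (rule diagm_one) (use assms unit_rinv in auto)
  have 2: "diagm n (\<lambda>j. rinv (u j)) * diagm n u = 1\<^sub>m n"
    unfolding diagm_mult by (rule diagm_one) (use assms unit_rinv in auto)
  show "diagm n u \<in> inv_mats n" by (rule inv_matsI[OF _ _ 1 2]) auto
  show "minv n (diagm n u) = diagm n (\<lambda>j. rinv (u j))" by (rule minv_unique[OF _ _ 1 2]) auto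
  show "diagonal_mat (diagm n u)" unfolding diagonal_mat_def diagm_def by auto
qed

lemma diag_equiv_LR: assumes M: "M \<in> unit_mats n" and z: "0 < n"
  shows "diag_equiv n (LambdaR n M) (LambdaL n M)"
proof -
  define c where "c = M $$ (0,0)"
  have cu: "is_unit_r c" unfolding c_def using unit_matsD[OF M] z by auto
  have du: "\<forall>j<n. is_unit_r ((\<lambda>_. rinv c) j)" using cu by simp
  have eq: "minv n (diagm n (\<lambda>_. rinv c)) * LambdaR n M * diagm n (\<lambda>_. rinv c) = LambdaL n M"
  proof -
    have "minv n (diagm n (\<lambda>_. rinv c)) = diagm n (\<lambda>_. c)"
      using diagm_inv(2)[OF du] cu by simp
    then have "minv n (diagm n (\<lambda>_. rinv c)) * LambdaR n M * diagm n (\<lambda>_. rinv c)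
        = scale n (\<lambda>_. c) (LambdaR n M) (\<lambda>_. rinv c)"
      by (simp add: scale_diagm LambdaR_def)
    also have "\<dots> = LambdaL n M"
    proof (rule eq_matI)
      fix j k assume "j < dim_row (LambdaL n M)" "k < dim_col (LambdaL n M)"
      then have j: "j < n" and k: "k < n" by (auto simp: LambdaL_def)
      show "scale n (\<lambda>_. c) (LambdaR n M) (\<lambda>_. rinv c) $$ (j,k) = LambdaL n M $$ (j,k)"
        using j k unit_rinv[OF cu] unfolding LambdaR_def LambdaL_def c_def
        by (simp add: mult.assoc)
    qed (auto simp: LambdaL_def scale_def)
    finally show ?thesis .
  qed
  show ?thesis unfolding diag_equiv_def
    using diagm_inv(1,3)[OF du] eq[symmetric] by blast
qed

theorem proposition4:
  fixes n :: nat
  assumes "n \<ge> 1"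
  shows "dom_Psi n = (dom_Phi_inv n :: 'a::ring_1 mat set)
    \<and> bij_betw (Psi n) (dom_Psi n) (dom_Phi n :: 'a mat set)
    \<and> bij_betw (Phi_inv n) (dom_Phi_inv n) (dom_Phi n :: 'a mat set)
    \<and> (\<forall>A \<in> dom_Psi n. diag_equiv n (Phi_inv n A) (Psi n A :: 'a mat))"
proof (intro conjI)
  have z: "0 < n" using assms by simp
  show D: "dom_Psi n = (dom_Phi_inv n :: 'a::ring_1 mat set)" by (rule dom_Psi_eq)
  have Qu: "\<And>A::'a mat. A \<in> dom_Phi_inv n \<Longrightarrow> A \<in> unit_mats n" unfolding dom_Phi_inv_iff by auto
  have Pu: "\<And>A::'a mat. A \<in> dom_Phi n \<Longrightarrow> A \<in> unit_mats n" unfolding dom_Phi_iff by auto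
  show B: "bij_betw (Phi_inv n) (dom_Phi_inv n) (dom_Phi n :: 'a mat set)"
    by (rule bij_betw_byWitness[where f' = "Phi n"]) (use Phi_P[OF _ z] Phi_inv_Q[OF _ z] in auto)
  show "bij_betw (Psi n) (dom_Psi n) (dom_Phi n :: 'a mat set)"
    unfolding D
  proof (rule bij_betw_byWitness[where f' = "\<lambda>X. J2 n (Phi_inv n (J2 n X))"])
    show "\<forall>a\<in>dom_Phi_inv n. J2 n (Phi_inv n (J2 n (Psi n a))) = (a::'a mat)"
    proof
      fix a :: "'a mat" assume a: "a \<in> dom_Phi_inv n"
      have P: "J2 n a \<in> dom_Phi n" using J2_Q_P[OF a] .
      have "Phi n (J2 n a) \<in> dom_Phi_inv n" using Phi_P(1)[OF P z] .
      then have "J2 n (Psi n a) = Phi n (J2 n a)" unfolding Psi_def using J2_J2 Qu by metis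
      then show "J2 n (Phi_inv n (J2 n (Psi n a))) = a"
        using Phi_P(2)[OF P z] J2_J2 Qu[OF a] by metis
    qed
    show "\<forall>a'\<in>dom_Phi n. Psi n (J2 n (Phi_inv n (J2 n a'))) = (a'::'a mat)"
    proof
      fix a :: "'a mat" assume a: "a \<in> dom_Phi n"
      have Q: "J2 n a \<in> dom_Phi_inv n" using J2_P_Q[OF a] .
      have "Phi_inv n (J2 n a) \<in> dom_Phi n" using Phi_inv_Q(1)[OF Q z] .
      then have "J2 n (J2 n (Phi_inv n (J2 n a))) = Phi_inv n (J2 n a)" using J2_J2 Pu by metis
      then show "Psi n (J2 n (Phi_inv n (J2 n a))) = a"
        unfolding Psi_def using Phi_inv_Q(2)[OF Q z] J2_J2 Pu[OF a] by metis
    qed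
    show "Psi n ` dom_Phi_inv n \<subseteq> (dom_Phi n :: 'a mat set)"
    proof
      fix X :: "'a mat" assume "X \<in> Psi n ` dom_Phi_inv n"
      then obtain a where a: "a \<in> dom_Phi_inv n" and X: "X = Psi n a" by blast
      have P: "J2 n a \<in> dom_Phi n" using J2_Q_P[OF a] .
      show "X \<in> dom_Phi n" unfolding X Psi_def using J2_Q_P[OF Phi_P(1)[OF P z]] .
    qed
    show "(\<lambda>X. J2 n (Phi_inv n (J2 n X))) ` dom_Phi n \<subseteq> (dom_Phi_inv n :: 'a mat set)"
    proof
      fix X :: "'a mat" assume "X \<in> (\<lambda>X. J2 n (Phi_inv n (J2 n X))) ` dom_Phi n"
      then obtain a where a: "a \<in> dom_Phi n" and X: "X = J2 n (Phi_inv n (J2 n a))" by blast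
      have Q: "J2 n a \<in> dom_Phi_inv n" using J2_P_Q[OF a] .
      show "X \<in> dom_Phi_inv n" unfolding X using J2_P_Q[OF Phi_inv_Q(1)[OF Q z]] .
    qed
  qed
  show "\<forall>A \<in> dom_Psi n. diag_equiv n (Phi_inv n A) (Psi n A :: 'a mat)"
  proof
    fix A :: "'a mat" assume "A \<in> dom_Psi n"
    then have A: "A \<in> dom_Phi_inv n" using D by simp
    then have Mu: "minv n (J2 n A) \<in> unit_mats n" unfolding dom_Phi_inv_iff by auto
    show "diag_equiv n (Phi_inv n A) (Psi n A)"
      unfolding Psi_Q[OF A] Phi_inv_def Jinv_def J1_def
      by (rule diag_equiv_LR[OF Mu z])
  qed
qed

end
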